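(* Let $\Omega\subset\mathbb R^d$ be a bounded Borel set, $f:\Omega\to[0,\infty)$ with $\int_\Omega f=1$, $p\ge1$, $x_1,x_2\in\Omega$, $h_1,h_2:[0,1]\to[0,\infty)$ continuous and non-decreasing, and assume $G$ is Lipschitz. Let $t_1\in\mathbb R$ be arbitrary and define for $n\ge1$ $$t_{n+1}=\frac1n\sum_{m=1}^nG(t_m),$$ with $\psi_n(x)=0$ if $\tau(x)<t_n$ and $\psi_n(x)=1$ otherwise. Then $t_n\to\bar t$ and $\psi_n\to\bar\psi$ uniformly on every compact subset of $\Omega\setminus\{\tau=\bar t\}$.
   Context: $\tau(x)=|x-x_1|^p-|x-x_2|^p$, $m(t)=\int_{\{x\in\Omega:\tau(x)<t\}}f\,dx$, $G(t)=h_2(1-m(t))-h_1(m(t))$. There is a unique $\bar t$ with $G(\bar t)=\bar t$, and $\bar\psi(x)=0$ if $\tau(x)<\bar t$, $\bar\psi(x)=1$ if $\tau(x)>\bar t$ (the unique equilibrium). *)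

theory Defs
  imports "HOL-Analysis.Analysis"
begin

definition tau :: "real \<Rightarrow> 'a::euclidean_space \<Rightarrow> 'a \<Rightarrow> 'a \<Rightarrow> real" where
  "tau p x1 x2 x = norm (x - x1) powr p - norm (x - x2) powr p"

definition mfun :: "'a::euclidean_space set \<Rightarrow> ('a \<Rightarrow> real) \<Rightarrow> real \<Rightarrow> 'a \<Rightarrow> 'a \<Rightarrow> real \<Rightarrow> real" where
  "mfun \<Omega> f p x1 x2 t = integral {x \<in> \<Omega>. tau p x1 x2 x < t} f"

definition Gfun :: "(real \<Rightarrow> real) \<Rightarrow> (real \<Rightarrow> real) \<Rightarrow> 'a::euclidean_space set \<Rightarrow> ('a \<Rightarrow> real)
    \<Rightarrow> real \<Rightarrow> 'a \<Rightarrow> 'a \<Rightarrow> real \<Rightarrow> real" where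
  "Gfun h1 h2 \<Omega> f p x1 x2 t = h2 (1 - mfun \<Omega> f p x1 x2 t) - h1 (mfun \<Omega> f p x1 x2 t)"

definition psi :: "real \<Rightarrow> 'a::euclidean_space \<Rightarrow> 'a \<Rightarrow> real \<Rightarrow> 'a \<Rightarrow> real" where
  "psi p x1 x2 s x = (if tau p x1 x2 x < s then 0 else 1)"

end

theory Submission imports Defs "HOL-Real_Asymp.Real_Asymp" begin

lemma tau_cont: "p \<ge> 1 \<Longrightarrow> continuous_on UNIV (tau p x1 (x2::'a::euclidean_space))"
  unfolding tau_def by (intro continuous_intros continuous_on_powr') auto

lemma mfun_props:
  fixes \<Omega> :: "'a::euclidean_space set"
  assumes "\<Omega> \<in> sets borel" "\<forall>x\<in>\<Omega>. f x \<ge> 0" "(f has_integral 1) \<Omega>" "p \<ge> 1"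
  shows "0 \<le> mfun \<Omega> f p x1 x2 s \<and> mfun \<Omega> f p x1 x2 s \<le> 1
     \<and> (s \<le> r \<longrightarrow> mfun \<Omega> f p x1 x2 s \<le> mfun \<Omega> f p x1 x2 r)"
proof -
  have intO: "f integrable_on \<Omega>" using assms(3) by blast
  have absO: "f absolutely_integrable_on \<Omega>"
    by (rule nonnegative_absolutely_integrable_1[OF intO]) (use assms(2) in auto)
  have int: "f integrable_on {x \<in> \<Omega>. tau p x1 x2 x < u}" for u
  proof -
    have "open {x. tau p x1 x2 x < u}"
      using tau_cont[OF assms(4)] continuous_on_const by (rule open_Collect_less)
    hence "\<Omega> \<inter> {x. tau p x1 x2 x < u} \<in> sets borel"
      by (rule sets.Int[OF assms(1) borel_open])
    moreover have "\<Omega> \<inter> {x. tau p x1 x2 x < u} = {x \<in> \<Omega>. tau p x1 x2 x < u}" by blast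
    ultimately have "{x \<in> \<Omega>. tau p x1 x2 x < u} \<in> sets borel" by simp
    hence "{x \<in> \<Omega>. tau p x1 x2 x < u} \<in> sets lebesgue" by simp
    hence "f absolutely_integrable_on {x \<in> \<Omega>. tau p x1 x2 x < u}"
      using set_integrable_subset[OF absO] by blast
    thus ?thesis using absolutely_integrable_on_def by blast
  qed
  have "0 \<le> mfun \<Omega> f p x1 x2 s" unfolding mfun_def
    by (rule integral_nonneg[OF int]) (use assms(2) in auto)
  moreover have "mfun \<Omega> f p x1 x2 s \<le> 1"
  proof -
    have "mfun \<Omega> f p x1 x2 s \<le> integral \<Omega> f" unfolding mfun_def
      by (rule integral_subset_le[OF _ int intO]) (use assms(2) in auto)
    thus ?thesis using assms(3) by (simp add: integral_unique)
  qed
  moreover have "s \<le> r \<longrightarrow> mfun \<Omega> f p x1 x2 s \<le> mfun \<Omega> f p x1 x2 r"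
    unfolding mfun_def
    using assms(2) by (intro impI integral_subset_le[OF _ int int]) auto
  ultimately show ?thesis by blast
qed

lemma key_step:
  fixes a d L k :: real
  assumes "d * a \<le> 0" "\<bar>d\<bar> \<le> L * \<bar>a\<bar>" "k \<ge> L + 2" "k \<ge> 2"
  shows "k * \<bar>a * (1 - 1 / k) + d / k\<bar> \<le> (k - 1) * \<bar>a\<bar>"
proof -
  have "a * (1 - 1 / k) + d / k = (a * (k - 1) + d) / k" using assms(4) by (simp add: field_simps)
  hence e: "k * \<bar>a * (1 - 1 / k) + d / k\<bar> = \<bar>a * (k - 1) + d\<bar>" using assms(4) by (simp add: abs_divide)
  have "\<bar>a * (k - 1) + d\<bar> \<le> (k - 1) * \<bar>a\<bar>"
  proof (cases "a \<ge> 0")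
    case True
    hence "d \<le> 0" "d \<ge> - L * a" using assms(1,2) True
      by (auto simp: mult_le_0_iff abs_if split: if_splits)
    moreover have "L * a \<le> (2 * k - 2) * a" using True assms(3,4) by (intro mult_right_mono) auto
    hence "L * a \<le> 2 * (a * (k - 1))" by (simp add: algebra_simps)
    moreover have "0 \<le> a * (k - 1)" using True assms(4) by simp
    moreover have "(k-1)*\<bar>a\<bar> = a*(k-1)" using True by (simp add: algebra_simps)
    ultimately show ?thesis unfolding abs_le_iff by linarith
  next
    case False
    hence "d \<ge> 0" "d \<le> - L * a" using assms(1,2) False
      by (auto simp: mult_le_0_iff abs_if split: if_splits)
    moreover have "L * (-a) \<le> (2 * k - 2) * (-a)" using False assms(3,4) by (intro mult_right_mono) auto
    hence "- (L * a) \<le> - 2 * (a * (k - 1))" by (simp add: algebra_simps)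
    moreover have "a * (k - 1) \<le> 0" using False assms(4) by (simp add: mult_nonpos_nonneg)
    moreover have "(k-1)*\<bar>a\<bar> = -(a*(k-1))" using False by (simp add: algebra_simps)
    ultimately show ?thesis unfolding abs_le_iff by linarith
  qed
  thus ?thesis using e by simp
qed

theorem theorem5p15:
  fixes \<Omega> :: "'a::euclidean_space set" and f :: "'a \<Rightarrow> real" and p :: real
    and x1 x2 :: 'a and h1 h2 :: "real \<Rightarrow> real" and t :: "nat \<Rightarrow> real" and tbar :: real
  assumes "\<Omega> \<in> sets borel" and "bounded \<Omega>"
    and "\<forall>x\<in>\<Omega>. f x \<ge> 0" and "(f has_integral 1) \<Omega>"
    and "p \<ge> 1" and "x1 \<in> \<Omega>" and "x2 \<in> \<Omega>"
    and "continuous_on {0..1} h1" and "mono_on {0..1} h1" and "\<forall>s\<in>{0..1}. h1 s \<ge> 0"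
    and "continuous_on {0..1} h2" and "mono_on {0..1} h2" and "\<forall>s\<in>{0..1}. h2 s \<ge> 0"
    and "\<exists>L. \<forall>s r. \<bar>Gfun h1 h2 \<Omega> f p x1 x2 s - Gfun h1 h2 \<Omega> f p x1 x2 r\<bar> \<le> L * \<bar>s - r\<bar>"
    and "Gfun h1 h2 \<Omega> f p x1 x2 tbar = tbar"
    and "\<forall>n\<ge>1. t (n + 1) = (1 / real n) * (\<Sum>m=1..n. Gfun h1 h2 \<Omega> f p x1 x2 (t m))"
  shows "t \<longlonglongrightarrow> tbar \<and>
    (\<forall>K. compact K \<and> K \<subseteq> \<Omega> - {x. tau p x1 x2 x = tbar} \<longrightarrow>
       uniform_limit K (\<lambda>n. psi p x1 x2 (t n)) (psi p x1 x2 tbar) sequentially)"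
proof -
  define G where "G = Gfun h1 h2 \<Omega> f p x1 x2"
  define m where "m = mfun \<Omega> f p x1 x2"
  have mp: "0 \<le> m s \<and> m s \<le> 1 \<and> (s \<le> r \<longrightarrow> m s \<le> m r)" for s r
    unfolding m_def using mfun_props[OF assms(1,3,4,5)] by blast
  have anti: "G r \<le> G s" if "s \<le> r" for s r
  proof -
    have "h2 (1 - m r) \<le> h2 (1 - m s)"
      using mp[of s r] mp[of r s] that by (intro mono_onD[OF assms(12)]) auto
    moreover have "h1 (m s) \<le> h1 (m r)"
      using mp[of s r] mp[of r s] that by (intro mono_onD[OF assms(9)]) auto
    ultimately show ?thesis unfolding G_def Gfun_def m_def[symmetric] by linarith
  qed
  obtain L0 where L0: "\<And>s r. \<bar>G s - G r\<bar> \<le> L0 * \<bar>s - r\<bar>" using assms(14) unfolding G_def by blast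
  define L where "L = max L0 0"
  have Lip: "\<bar>G s - G r\<bar> \<le> L * \<bar>s - r\<bar>" for s r
    using L0[of s r] unfolding L_def by (smt (verit) abs_ge_zero max.cobounded1 mult_right_mono)
  have hfix: "G tbar = tbar" using assms(15) unfolding G_def .
  have rec0: "t (n + 1) = (1 / real n) * (\<Sum>m=1..n. G (t m))" if "n \<ge> 1" for n
    using assms(16)[rule_format, OF that] unfolding G_def .
  have rec: "t (k + 1) = t k + (G (t k) - t k) / real k" if "k \<ge> 2" for k
  proof -
    define n where "n = k - 1"
    have n: "k = n + 1" "n \<ge> 1" using that unfolding n_def by auto
    have s1: "(\<Sum>m=1..n. G (t m)) = real n * t (n + 1)" using rec0[OF n(2)] n(2) by simp
    have "(\<Sum>m=1..n+1. G (t m)) = (\<Sum>m=1..n. G (t m)) + G (t (n+1))" by simp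
    hence "t (n + 2) = (real n * t (n + 1) + G (t (n+1))) / real (n + 1)"
      using rec0[of "n+1"] s1 by simp
    thus ?thesis using n by (simp add: field_simps)
  qed
  define N where "N = max 2 (nat \<lceil>L\<rceil> + 2)"
  have N: "real N \<ge> L + 2" "N \<ge> 2" unfolding N_def by linarith+
  have stepk: "real k * \<bar>t (k + 1) - tbar\<bar> \<le> (real k - 1) * \<bar>t k - tbar\<bar>" if "k \<ge> N" for k
  proof -
    have k2: "k \<ge> 2" and kL: "real k \<ge> L + 2" using that N by auto
    define a where "a = t k - tbar"
    define d where "d = G (t k) - G tbar"
    have "t (k + 1) - tbar = a * (1 - 1 / real k) + d / real k"
      unfolding a_def d_def rec[OF k2] hfix using k2 by (simp add: field_simps)
    moreover have "d * a \<le> 0"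
    proof (cases "t k \<ge> tbar")
      case True thus ?thesis using anti[OF True] unfolding a_def d_def by (simp add: mult_nonpos_nonneg)
    next
      case False thus ?thesis using anti[of "t k" tbar] unfolding a_def d_def
        by (intro mult_nonneg_nonpos) auto
    qed
    moreover have "\<bar>d\<bar> \<le> L * \<bar>a\<bar>" unfolding a_def d_def by (rule Lip)
    ultimately show ?thesis using key_step[of d a L "real k"] k2 kL by (simp add: a_def)
  qed
  define C where "C = (real N - 1) * \<bar>t N - tbar\<bar>"
  have bnd: "(real k - 1) * \<bar>t k - tbar\<bar> \<le> C" if "k \<ge> N" for k
    using that
  proof (induction k rule: dec_induct)
    case base thus ?case unfolding C_def by simp
  next
    case (step k) thus ?case using stepk[of k] by simp
  qed
  have conv: "t \<longlonglongrightarrow> tbar"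
  proof -
    have "(\<lambda>k. t k - tbar) \<longlonglongrightarrow> 0"
    proof (rule Lim_null_comparison)
      show "\<forall>\<^sub>F k in sequentially. norm (t k - tbar) \<le> C / (real k - 1)"
        using eventually_ge_at_top[of N]
      proof eventually_elim
        case (elim k)
        hence "real k - 1 > 0" using N by auto
        thus ?case using bnd[OF elim] by (simp add: field_simps)
      qed
      show "(\<lambda>k. C / (real k - 1)) \<longlonglongrightarrow> 0" by real_asymp
    qed
    thus ?thesis by (rule LIM_zero_cancel)
  qed
  have unif: "uniform_limit K (\<lambda>n. psi p x1 x2 (t n)) (psi p x1 x2 tbar) sequentially"
    if K: "compact K" "K \<subseteq> \<Omega> - {x. tau p x1 x2 x = tbar}" for K
  proof (cases "K = {}")
    case True thus ?thesis by (simp add: uniform_limit_iff)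
  next
    case False
    define g where "g x = \<bar>tau p x1 x2 x - tbar\<bar>" for x
    have "continuous_on K g" unfolding g_def
      using tau_cont[OF assms(5)] by (intro continuous_intros) (auto intro: continuous_on_subset)
    hence "compact (g ` K)" using K(1) by (rule compact_continuous_image)
    then obtain z where z: "z \<in> g ` K" "\<And>y. y \<in> g ` K \<Longrightarrow> z \<le> y"
      using compact_attains_inf[of "g ` K"] False by blast
    have zpos: "z > 0" using z(1) K(2) unfolding g_def by auto
    have "\<forall>\<^sub>F n in sequentially. dist (t n) tbar < z" using conv zpos by (rule tendstoD)
    hence ev: "\<forall>\<^sub>F n in sequentially. \<forall>x\<in>K. psi p x1 x2 (t n) x = psi p x1 x2 tbar x"
    proof eventually_elim
      case (elim n)
      show ?case
      proof
        fix x assume "x \<in> K"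
        hence "g x \<ge> z" using z(2) by auto
        thus "psi p x1 x2 (t n) x = psi p x1 x2 tbar x"
          using elim unfolding psi_def g_def dist_real_def by auto
      qed
    qed
    show ?thesis unfolding uniform_limit_iff
    proof (intro allI impI)
      fix e :: real assume "e > 0"
      from ev show "\<forall>\<^sub>F n in sequentially. \<forall>x\<in>K. dist (psi p x1 x2 (t n) x) (psi p x1 x2 tbar x) < e"
        by (rule eventually_mono) (simp add: \<open>e > 0\<close>)
    qed
  qed
  show ?thesis using conv unif by blast
qed

end
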